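(* Let $\rho=|\psi\rangle\langle\psi|$ be an $n$-qubit pure state, $S\subseteq[n]$ non-empty with $s=|S|$, $\epsilon>0$ and $1-\delta\in(0,1)$. Let $N_B=\lceil 8\log(1/\delta)\rceil$, $B=\lceil 4\cdot 3^s/\epsilon^2\rceil$, and perform $M=2N_BB$ independent local SIC-POVM measurements on the qubits of $S$ of copies of $\rho$, with outcomes $\mathbf{Q}_1,\dots,\mathbf{Q}_M\in\{1,2,3,4\}^s$ i.i.d. with distribution $P(\mathbf{q})=\operatorname{tr}\big(\rho\bigotimes_{i\in S}|\tilde\phi_{q_i}\rangle\langle\tilde\phi_{q_i}|\big)$. For each $1\le b\le N_B$ define $$\overline{\mathcal{C}}^{(b)}_{|\psi\rangle}(S)=1-3^s\frac1B\sum_{i=(b-1)B+1}^{bB}\mathbb{1}[\mathbf{Q}_{2i-1}=\mathbf{Q}_{2i}].$$ Then $$\Pr\Big[\big|\operatorname{median}\big(\overline{\mathcal{C}}^{(1)}_{|\psi\rangle}(S),\dots,\overline{\mathcal{C}}^{(N_B)}_{|\psi\rangle}(S)\big)-\mathcal{C}_{|\psi\rangle}(S)\big|\ge\epsilon\Big]\le\delta,$$ giving an upper bound $O\big(3^s\log(1/\delta)\epsilon^{-2}\big)$ on the number of SIC measurements needed to estimate $\mathcal{C}_{|\psi\rangle}(S)$.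
   Context: $[n]=\{1,\dots,n\}$ labels the qubits. For an $n$-qubit pure state $|\psi\rangle$ and a non-empty $S\subseteq[n]$ with $s=|S|$, the concentratable entanglement is $\mathcal{C}_{|\psi\rangle}(S)=1-\frac{1}{2^s}\sum_{\alpha\subseteq S}\operatorname{tr}(\rho_\alpha^2)$, where $\rho_\alpha$ is the reduced state of $|\psi\rangle\langle\psi|$ on the qubits in $\alpha$, and $\operatorname{tr}(\rho_\emptyset^2):=1$. A single-qubit SIC-POVM consists of $|\tilde\phi_j\rangle=\frac{1}{\sqrt2}|\phi_j\rangle$, $j=1,\dots,4$, where $|\phi_j\rangle$ are unit vectors in $\mathbb{C}^2$ with $|\langle\phi_j|\phi_k\rangle|^2=1/3$ for $j\neq k$, so that $\sum_j|\tilde\phi_j\rangle\langle\tilde\phi_j|=\mathbb{I}$. $\mathbb{1}[A]$ is $1$ if $A$ holds and $0$ otherwise. *)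

theory Defs
  imports "HOL-Probability.Probability"
begin

text \<open>Computational basis of n qubits: a basis vector is identified with the set
T of qubits (a subset of {1..n}) that are in state |1>. A state vector is a
function from such sets to amplitudes.\<close>

type_synonym qstate = "nat set \<Rightarrow> complex"

definition pure_state :: "nat \<Rightarrow> qstate \<Rightarrow> bool" where
  "pure_state n \<psi> \<longleftrightarrow> (\<forall>T. \<not> T \<subseteq> {1..n} \<longrightarrow> \<psi> T = 0)
      \<and> (\<Sum>T\<in>Pow {1..n}. (cmod (\<psi> T))^2) = 1"

text \<open>Matrix entry <x| rho_alpha |y> of the reduced state on the qubits alpha
(x, y subsets of alpha), obtained by tracing out {1..n} - alpha.\<close>
definition reduced_state :: "nat \<Rightarrow> qstate \<Rightarrow> nat set \<Rightarrow> nat set \<Rightarrow> nat set \<Rightarrow> complex" where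
  "reduced_state n \<psi> \<alpha> x y = (\<Sum>z\<in>Pow ({1..n} - \<alpha>). \<psi> (x \<union> z) * cnj (\<psi> (y \<union> z)))"

text \<open>tr(rho_alpha^2), with the convention tr(rho_empty^2) = 1.\<close>
definition purity :: "nat \<Rightarrow> qstate \<Rightarrow> nat set \<Rightarrow> real" where
  "purity n \<psi> \<alpha> = (if \<alpha> = {} then 1 else
     Re (\<Sum>x\<in>Pow \<alpha>. \<Sum>y\<in>Pow \<alpha>. reduced_state n \<psi> \<alpha> x y * reduced_state n \<psi> \<alpha> y x))"

definition concentratable_entanglement :: "nat \<Rightarrow> qstate \<Rightarrow> nat set \<Rightarrow> real" where
  "concentratable_entanglement n \<psi> S =
     1 - (1 / 2 ^ card S) * (\<Sum>\<alpha>\<in>Pow S. purity n \<psi> \<alpha>)"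

text \<open>Single-qubit SIC vectors phi_1..phi_4 (a qubit vector is bool => complex,
False = |0>, True = |1>); the POVM elements are (1/2)|phi_j><phi_j|.\<close>
definition sic_povm :: "(nat \<Rightarrow> bool \<Rightarrow> complex) \<Rightarrow> bool" where
  "sic_povm \<phi> \<longleftrightarrow>
     (\<forall>j\<in>{1..4}. (\<Sum>b\<in>UNIV. (cmod (\<phi> j b))^2) = 1) \<and>
     (\<forall>j\<in>{1..4}. \<forall>k\<in>{1..4}. j \<noteq> k \<longrightarrow>
        (cmod (\<Sum>b\<in>UNIV. cnj (\<phi> j b) * \<phi> k b))^2 = 1/3)"

text \<open>P(q) = tr(rho (tensor_{i in S} |phi~_{q_i}><phi~_{q_i}|) (x) I), for q : S -> {1..4}.\<close>
definition sic_prob :: "nat \<Rightarrow> qstate \<Rightarrow> (nat \<Rightarrow> bool \<Rightarrow> complex) \<Rightarrow> nat set \<Rightarrow> (nat \<Rightarrow> nat) \<Rightarrow> real" where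
  "sic_prob n \<psi> \<phi> S q = (1 / 2 ^ card S) *
     (\<Sum>z\<in>Pow ({1..n} - S).
        (cmod (\<Sum>x\<in>Pow S. (\<Prod>i\<in>S. cnj (\<phi> (q i) (i \<in> x))) * \<psi> (x \<union> z)))^2)"

definition median :: "real list \<Rightarrow> real" where
  "median xs = (let ys = sort xs; m = length xs in
     if even m then (ys ! (m div 2 - 1) + ys ! (m div 2)) / 2 else ys ! (m div 2))"

definition num_blocks :: "real \<Rightarrow> nat" where
  "num_blocks \<delta> = nat \<lceil>8 * ln (1 / \<delta>)\<rceil>"

definition block_size :: "nat \<Rightarrow> real \<Rightarrow> nat" where
  "block_size s \<epsilon> = nat \<lceil>4 * 3 ^ s / \<epsilon>^2\<rceil>"

definition block_estimate :: "nat \<Rightarrow> nat \<Rightarrow> (nat \<Rightarrow> 'o) \<Rightarrow> nat \<Rightarrow> real" where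
  "block_estimate s B Qs b = 1 - 3 ^ s * (1 / real B) *
     real (card {i\<in>{(b-1)*B+1..b*B}. Qs (2*i-1) = Qs (2*i)})"

end

theory Submission
  imports Defs
begin

lemma sum_bool4: "(\<Sum>a\<in>UNIV. \<Sum>b\<in>UNIV. \<Sum>c\<in>UNIV. \<Sum>d\<in>UNIV. f a * g b * h c * k d) = 
  (sum f UNIV) * (sum g UNIV) * (sum h UNIV) * (sum k (UNIV::bool set)) " for f g h k :: "bool \<Rightarrow> complex"
  by (simp add: UNIV_bool algebra_simps)

lemma sum4_zero:
  fixes f :: "bool \<Rightarrow> bool \<Rightarrow> bool \<Rightarrow> bool \<Rightarrow> real"
  assumes nn: "\<And>a b c d. f a b c d \<ge> 0"
    and s: "(\<Sum>a\<in>UNIV. \<Sum>b\<in>UNIV. \<Sum>c\<in>UNIV. \<Sum>d\<in>UNIV. f a b c d) = 0"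
  shows "f a b c d = 0"
proof -
  have n3: "(\<Sum>d\<in>UNIV. f a b c d) \<ge> 0" for a b c by (intro sum_nonneg nn)
  have n2: "(\<Sum>c\<in>UNIV. \<Sum>d\<in>UNIV. f a b c d) \<ge> 0" for a b by (intro sum_nonneg n3)
  have n1: "(\<Sum>b\<in>UNIV. \<Sum>c\<in>UNIV. \<Sum>d\<in>UNIV. f a b c d) \<ge> 0" for a by (intro sum_nonneg n2)
  from s have "(\<Sum>b\<in>UNIV. \<Sum>c\<in>UNIV. \<Sum>d\<in>UNIV. f a b c d) = 0"
    using sum_nonneg_eq_0_iff[of UNIV "\<lambda>a. (\<Sum>b\<in>UNIV. \<Sum>c\<in>UNIV. \<Sum>d\<in>UNIV. f a b c d)"] n1 by auto
  hence "(\<Sum>c\<in>UNIV. \<Sum>d\<in>UNIV. f a b c d) = 0"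
    using sum_nonneg_eq_0_iff[of UNIV "\<lambda>b. (\<Sum>c\<in>UNIV. \<Sum>d\<in>UNIV. f a b c d)"] n2 by auto
  hence "(\<Sum>d\<in>UNIV. f a b c d) = 0"
    using sum_nonneg_eq_0_iff[of UNIV "\<lambda>c. (\<Sum>d\<in>UNIV. f a b c d)"] n3 by auto
  thus ?thesis
    using sum_nonneg_eq_0_iff[of UNIV "\<lambda>d. f a b c d"] nn by auto
qed

lemma sic_2design:
  assumes "sic_povm \<phi>"
  shows "(\<Sum>j\<in>{1..4::nat}. cnj (\<phi> j a) * \<phi> j b * cnj (\<phi> j c) * \<phi> j d)
     = (2/3) * (of_bool (a=b \<and> c=d) + of_bool (a=d \<and> c=b))"
proof -
  define ip where "ip j k = (\<Sum>b\<in>UNIV. cnj (\<phi> j b) * \<phi> k b)" for j k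
  have n1: "ip j j = 1" if "j \<in> {1..4}" for j
  proof -
    have "(\<Sum>b\<in>UNIV. (cmod (\<phi> j b))^2) = 1" using assms that unfolding sic_povm_def by blast
    hence "complex_of_real (\<Sum>b\<in>UNIV. (cmod (\<phi> j b))^2) = 1" by simp
    thus ?thesis unfolding ip_def of_real_sum complex_norm_square by (simp add: mult.commute)
  qed
  have n2: "ip j k * cnj (ip j k) = 1/3" if "j \<in> {1..4}" "k \<in> {1..4}" "j \<noteq> k" for j k
  proof -
    have "(cmod (ip j k))^2 = 1/3" using assms that unfolding sic_povm_def ip_def by blast
    hence "complex_of_real ((cmod (ip j k))^2) = complex_of_real (1/3)" by (rule arg_cong)
    hence "complex_of_real ((cmod (ip j k))^2) = 1/3" by simp
    thus ?thesis unfolding complex_norm_square by simp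
  qed
  have n3: "(ip j k * cnj (ip j k)) * (ip j k * cnj (ip j k)) = (if j = k then 1 else 1/9)"
    if "j \<in> {1..4}" "k \<in> {1..4}" for j k
  proof (cases "j = k")
    case True thus ?thesis using n1 that by simp
  next
    case False hence h: "ip j k * cnj (ip j k) = 1/3" using n2[OF that] by blast show ?thesis unfolding h using False by simp
  qed
  have F4: "{1..4::nat} = {1,2,3,4}" by auto
  define T where "T a b c d = (\<Sum>j\<in>{1..4::nat}. cnj (\<phi> j a) * \<phi> j b * cnj (\<phi> j c) * \<phi> j d)" for a b c d
  define E :: "bool \<Rightarrow> bool \<Rightarrow> bool \<Rightarrow> bool \<Rightarrow> complex" where
    "E a b c d = (2/3) * (of_bool (a=b \<and> c=d) + of_bool (a=d \<and> c=b))" for a b c d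
  have i: "(\<Sum>a\<in>UNIV. \<Sum>b\<in>UNIV. \<Sum>c\<in>UNIV. \<Sum>d\<in>UNIV. T a b c d * cnj (T a b c d)) = 16/3"
  proof -
    have "(\<Sum>a\<in>UNIV. \<Sum>b\<in>UNIV. \<Sum>c\<in>UNIV. \<Sum>d\<in>UNIV. T a b c d * cnj (T a b c d))
      = (\<Sum>a\<in>UNIV. \<Sum>b\<in>UNIV. \<Sum>c\<in>UNIV. \<Sum>d\<in>UNIV. \<Sum>j\<in>{1..4::nat}. \<Sum>k\<in>{1..4::nat}.
          (cnj (\<phi> j a) * \<phi> k a) * (\<phi> j b * cnj (\<phi> k b)) * (cnj (\<phi> j c) * \<phi> k c) * (\<phi> j d * cnj (\<phi> k d)))"
      unfolding T_def cnj_sum sum_product by (simp add: mult_ac)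
    also have "\<dots> = (\<Sum>j\<in>{1..4::nat}. \<Sum>k\<in>{1..4::nat}. \<Sum>a\<in>UNIV. \<Sum>b\<in>UNIV. \<Sum>c\<in>UNIV. \<Sum>d\<in>UNIV.
          (cnj (\<phi> j a) * \<phi> k a) * (\<phi> j b * cnj (\<phi> k b)) * (cnj (\<phi> j c) * \<phi> k c) * (\<phi> j d * cnj (\<phi> k d)))"
      by (simp only: sum.swap[where A="UNIV::bool set" and B="{1..4::nat}"])
    also have "\<dots> = (\<Sum>j\<in>{1..4::nat}. \<Sum>k\<in>{1..4::nat}. (ip j k * cnj (ip j k)) * (ip j k * cnj (ip j k)))"
      unfolding sum_bool4 ip_def cnj_sum by (simp add: mult_ac)
    also have "\<dots> = (\<Sum>j\<in>{1..4::nat}. \<Sum>k\<in>{1..4::nat}. (if j = k then 1 else 1/9))"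
      by (intro sum.cong refl) (simp add: n3)
    also have "\<dots> = 16/3"
      unfolding F4 by simp

    finally show ?thesis .
  qed
  have ii0: "(\<Sum>a\<in>UNIV. \<Sum>c\<in>UNIV. T a a c c) = 4"
  proof -
    have "(\<Sum>a\<in>UNIV. \<Sum>c\<in>UNIV. T a a c c) = (\<Sum>j\<in>{1..4::nat}. ip j j * ip j j)"
      unfolding T_def ip_def sum_product
      by (simp only: sum.swap[where A="UNIV::bool set" and B="{1..4::nat}"]) (simp add: mult_ac)
    also have "\<dots> = 4" using n1 by simp
    finally show ?thesis .
  qed
  have ii1: "(\<Sum>a\<in>UNIV. \<Sum>c\<in>UNIV. T a c c a) = 4"
  proof -
    have "(\<Sum>a\<in>UNIV. \<Sum>c\<in>UNIV. T a c c a) = (\<Sum>j\<in>{1..4::nat}. ip j j * ip j j)"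
      unfolding T_def ip_def sum_product
      by (simp only: sum.swap[where A="UNIV::bool set" and B="{1..4::nat}"]) (simp add: mult_ac)
    also have "\<dots> = 4" using n1 by simp
    finally show ?thesis .
  qed
  have ii: "(\<Sum>a\<in>UNIV. \<Sum>b\<in>UNIV. \<Sum>c\<in>UNIV. \<Sum>d\<in>UNIV. T a b c d * E a b c d) = 16/3"
  proof -
    have "(\<Sum>a\<in>UNIV. \<Sum>b\<in>UNIV. \<Sum>c\<in>UNIV. \<Sum>d\<in>UNIV. T a b c d * E a b c d)
       = (2/3) * ((\<Sum>a\<in>UNIV. \<Sum>c\<in>UNIV. T a a c c) + (\<Sum>a\<in>UNIV. \<Sum>c\<in>UNIV. T a c c a))"
      by (simp add: E_def UNIV_bool algebra_simps)
    thus ?thesis using ii0 ii1 by simp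
  qed
  have iii: "(\<Sum>a\<in>UNIV. \<Sum>b\<in>UNIV. \<Sum>c\<in>UNIV. \<Sum>d\<in>UNIV. E a b c d * cnj (T a b c d)) = 16/3"
  proof -
    have cE: "\<And>a b c d. cnj (E a b c d) = E a b c d" unfolding E_def by (case_tac a; case_tac b; case_tac c; case_tac d) simp_all
    have "(\<Sum>a\<in>UNIV. \<Sum>b\<in>UNIV. \<Sum>c\<in>UNIV. \<Sum>d\<in>UNIV. E a b c d * cnj (T a b c d))
      = cnj (\<Sum>a\<in>UNIV. \<Sum>b\<in>UNIV. \<Sum>c\<in>UNIV. \<Sum>d\<in>UNIV. T a b c d * E a b c d)"
      unfolding cnj_sum complex_cnj_mult cE by (simp only: mult.commute)
    also have "\<dots> = 16/3" unfolding ii by simp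
    finally show ?thesis .
  qed
  have iv: "(\<Sum>a\<in>UNIV. \<Sum>b\<in>UNIV. \<Sum>c\<in>UNIV. \<Sum>d\<in>UNIV. E a b c d * cnj (E a b c d)) = 16/3"
    by (simp add: E_def UNIV_bool)
  have cE: "\<And>a b c d. cnj (E a b c d) = E a b c d" unfolding E_def by (case_tac a; case_tac b; case_tac c; case_tac d) simp_all
  have pt: "(T a b c d - E a b c d) * cnj (T a b c d - E a b c d) = T a b c d * cnj (T a b c d) - T a b c d * E a b c d - E a b c d * cnj (T a b c d) + E a b c d * cnj (E a b c d)" for a b c d
    using cE[of a b c d] by (simp add: algebra_simps)
  have tot: "(\<Sum>a\<in>UNIV. \<Sum>b\<in>UNIV. \<Sum>c\<in>UNIV. \<Sum>d\<in>UNIV. (T a b c d - E a b c d) * cnj (T a b c d - E a b c d)) = 0"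
  proof -
    have "(\<Sum>a\<in>UNIV. \<Sum>b\<in>UNIV. \<Sum>c\<in>UNIV. \<Sum>d\<in>UNIV. (T a b c d - E a b c d) * cnj (T a b c d - E a b c d))
      = (\<Sum>a\<in>UNIV. \<Sum>b\<in>UNIV. \<Sum>c\<in>UNIV. \<Sum>d\<in>UNIV. T a b c d * cnj (T a b c d))
      - (\<Sum>a\<in>UNIV. \<Sum>b\<in>UNIV. \<Sum>c\<in>UNIV. \<Sum>d\<in>UNIV. T a b c d * E a b c d)
      - (\<Sum>a\<in>UNIV. \<Sum>b\<in>UNIV. \<Sum>c\<in>UNIV. \<Sum>d\<in>UNIV. E a b c d * cnj (T a b c d))
      + (\<Sum>a\<in>UNIV. \<Sum>b\<in>UNIV. \<Sum>c\<in>UNIV. \<Sum>d\<in>UNIV. E a b c d * cnj (E a b c d))"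
      unfolding pt by (simp only: sum.distrib sum_subtractf)
    thus ?thesis using i ii iii iv by simp
  qed
  have "(\<Sum>a\<in>UNIV. \<Sum>b\<in>UNIV. \<Sum>c\<in>UNIV. \<Sum>d\<in>UNIV. complex_of_real ((cmod (T a b c d - E a b c d))^2)) = 0"
    unfolding complex_norm_square by (rule tot)
  hence z: "(\<Sum>a\<in>UNIV. \<Sum>b\<in>UNIV. \<Sum>c\<in>UNIV. \<Sum>d\<in>UNIV. ((cmod (T a b c d - E a b c d))^2)) = 0"
    unfolding of_real_sum[symmetric] of_real_eq_0_iff .
  have "(cmod (T a b c d - E a b c d))^2 = 0"
    using sum4_zero[where f="\<lambda>a b c d. (cmod (T a b c d - E a b c d))^2", OF _ z] by simp
  hence "T a b c d = E a b c d" by simp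
  thus ?thesis unfolding T_def E_def .
qed

lemma prod_of_bool: "finite A \<Longrightarrow> (\<Prod>i\<in>A. (of_bool (P i) :: 'a::comm_semiring_1)) = of_bool (\<forall>i\<in>A. P i)"
  by (induction rule: finite_induct) auto

lemma sum_Pow_Un:
  assumes "finite A" "finite B" "A \<inter> B = {}"
  shows "(\<Sum>x\<in>Pow (A \<union> B). f x) = (\<Sum>u\<in>Pow A. \<Sum>t\<in>Pow B. f (u \<union> t))"
proof -
  have inj: "inj_on (\<lambda>(u,t). u \<union> t) (Pow A \<times> Pow B)"
    using assms(3) by (auto simp: inj_on_def) blast+
  have img: "(\<lambda>(u,t). u \<union> t) ` (Pow A \<times> Pow B) = Pow (A \<union> B)"
  proof
    show "(\<lambda>(u,t). u \<union> t) ` (Pow A \<times> Pow B) \<subseteq> Pow (A \<union> B)" by auto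
    show "Pow (A \<union> B) \<subseteq> (\<lambda>(u,t). u \<union> t) ` (Pow A \<times> Pow B)"
    proof
      fix x assume "x \<in> Pow (A \<union> B)"
      hence "x = (\<lambda>(u,t). u \<union> t) (x \<inter> A, x \<inter> B)" by auto
      thus "x \<in> (\<lambda>(u,t). u \<union> t) ` (Pow A \<times> Pow B)" by blast
    qed
  qed
  have "(\<Sum>x\<in>Pow (A \<union> B). f x) = (\<Sum>p\<in>Pow A \<times> Pow B. f ((\<lambda>(u,t). u \<union> t) p))"
    by (subst img[symmetric], rule sum.reindex[OF inj, unfolded comp_def])
  also have "\<dots> = (\<Sum>p\<in>Pow A \<times> Pow B. case p of (u,t) \<Rightarrow> f (u \<union> t))"
    by (rule sum.cong) auto
  also have "\<dots> = (\<Sum>u\<in>Pow A. \<Sum>t\<in>Pow B. f (u \<union> t))"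
    by (rule sum.cartesian_product[symmetric])
  finally show ?thesis .
qed

lemma sic_tensor:
  assumes "sic_povm \<phi>" "finite S"
  shows "(\<Sum>q\<in>Pi\<^sub>E S (\<lambda>_. {1..4::nat}). \<Prod>i\<in>S. cnj (\<phi> (q i) (i\<in>x)) * \<phi> (q i) (i\<in>y) * cnj (\<phi> (q i) (i\<in>x')) * \<phi> (q i) (i\<in>y'))
    = (2/3)^card S * (\<Sum>\<alpha>\<in>Pow S. of_bool (\<forall>i\<in>\<alpha>. (i\<in>x \<longleftrightarrow> i\<in>y') \<and> (i\<in>x' \<longleftrightarrow> i\<in>y))
                                 * of_bool (\<forall>i\<in>S-\<alpha>. (i\<in>x \<longleftrightarrow> i\<in>y) \<and> (i\<in>x' \<longleftrightarrow> i\<in>y')))"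
proof -
  have "(\<Sum>q\<in>Pi\<^sub>E S (\<lambda>_. {1..4::nat}). \<Prod>i\<in>S. cnj (\<phi> (q i) (i\<in>x)) * \<phi> (q i) (i\<in>y) * cnj (\<phi> (q i) (i\<in>x')) * \<phi> (q i) (i\<in>y'))
     = (\<Prod>i\<in>S. \<Sum>j\<in>{1..4::nat}. cnj (\<phi> j (i\<in>x)) * \<phi> j (i\<in>y) * cnj (\<phi> j (i\<in>x')) * \<phi> j (i\<in>y'))"
    by (rule prod_sum_PiE[symmetric]) (use assms in auto)
  also have "\<dots> = (\<Prod>i\<in>S. (2/3) * (of_bool ((i\<in>x) = (i\<in>y') \<and> (i\<in>x') = (i\<in>y)) + of_bool ((i\<in>x) = (i\<in>y) \<and> (i\<in>x') = (i\<in>y'))))"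
    unfolding sic_2design[OF assms(1)] by (intro prod.cong refl arg_cong[where f="\<lambda>t. (2/3)*t"] add.commute)
  also have "\<dots> = (2/3)^card S * (\<Prod>i\<in>S. of_bool ((i\<in>x) = (i\<in>y') \<and> (i\<in>x') = (i\<in>y)) + of_bool ((i\<in>x) = (i\<in>y) \<and> (i\<in>x') = (i\<in>y')))"
    by (simp only: prod.distrib prod_constant)
  also have "(\<Prod>i\<in>S. of_bool ((i\<in>x) = (i\<in>y') \<and> (i\<in>x') = (i\<in>y)) + of_bool ((i\<in>x) = (i\<in>y) \<and> (i\<in>x') = (i\<in>y')))
     = (\<Sum>\<alpha>\<in>Pow S. (\<Prod>i\<in>\<alpha>. of_bool ((i\<in>x) = (i\<in>y') \<and> (i\<in>x') = (i\<in>y))) * (\<Prod>i\<in>S-\<alpha>. of_bool ((i\<in>x) = (i\<in>y) \<and> (i\<in>x') = (i\<in>y'))) :: complex)"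
    by (rule prod_add[OF assms(2)])
  also have "\<dots> = (\<Sum>\<alpha>\<in>Pow S. of_bool (\<forall>i\<in>\<alpha>. (i\<in>x \<longleftrightarrow> i\<in>y') \<and> (i\<in>x' \<longleftrightarrow> i\<in>y))
                                 * of_bool (\<forall>i\<in>S-\<alpha>. (i\<in>x \<longleftrightarrow> i\<in>y) \<and> (i\<in>x' \<longleftrightarrow> i\<in>y')))"
  proof (intro sum.cong refl)
    fix \<alpha> assume "\<alpha> \<in> Pow S"
    hence f: "finite \<alpha>" "finite (S - \<alpha>)" using assms(2) finite_subset by auto
    show "(\<Prod>i\<in>\<alpha>. of_bool ((i\<in>x) = (i\<in>y') \<and> (i\<in>x') = (i\<in>y))) * (\<Prod>i\<in>S-\<alpha>. of_bool ((i\<in>x) = (i\<in>y) \<and> (i\<in>x') = (i\<in>y'))) = 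
      (of_bool (\<forall>i\<in>\<alpha>. (i\<in>x \<longleftrightarrow> i\<in>y') \<and> (i\<in>x' \<longleftrightarrow> i\<in>y))
                                 * of_bool (\<forall>i\<in>S-\<alpha>. (i\<in>x \<longleftrightarrow> i\<in>y) \<and> (i\<in>x' \<longleftrightarrow> i\<in>y')) :: complex)"
      by (simp only: prod_of_bool[OF f(1)] prod_of_bool[OF f(2)])
  qed
  finally show ?thesis .
qed

lemma perm6: "(\<Sum>z\<in>Z1. \<Sum>z'\<in>Z2. \<Sum>u\<in>U1. \<Sum>t\<in>T1. \<Sum>v\<in>V1. \<Sum>t'\<in>T2. f z z' u t v t') =
  (\<Sum>u\<in>U1. \<Sum>v\<in>V1. \<Sum>t\<in>T1. \<Sum>t'\<in>T2. \<Sum>z\<in>Z1. \<Sum>z'\<in>Z2. f z z' u t v t')"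
  by (simp only: sum.swap[where A=Z1 and B=U1] sum.swap[where A=Z2 and B=U1]
      sum.swap[where A=Z1 and B=V1] sum.swap[where A=Z2 and B=V1] sum.swap[where A=T1 and B=V1]
      sum.swap[where A=Z1 and B=T1] sum.swap[where A=Z2 and B=T1]
      sum.swap[where A=Z1 and B=T2] sum.swap[where A=Z2 and B=T2])

lemma delta2:
  assumes "finite A" "finite B" "a \<in> A" "b \<in> B"
  shows "(\<Sum>y\<in>A. \<Sum>y'\<in>B. (if y = a \<and> y' = b then 1 else 0) * F y y') = (F a b :: complex)"
proof -
  have "(\<Sum>y\<in>A. \<Sum>y'\<in>B. (if y = a \<and> y' = b then 1 else 0) * F y y') = 
        (\<Sum>y\<in>A. if y = a then (\<Sum>y'\<in>B. if y' = b then F y y' else 0) else 0)"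
  proof (intro sum.cong refl)
    fix y show "(\<Sum>y'\<in>B. (if y = a \<and> y' = b then 1 else 0) * F y y') = (if y = a then (\<Sum>y'\<in>B. if y' = b then F y y' else 0) else 0)"
    proof -
      have e: "\<And>y'. (if y = a \<and> y' = b then 1 else 0) * F y y' = (if y = a then (if y' = b then F y y' else 0) else 0)" by simp
      show ?thesis by (simp only: e) (cases "y = a", simp_all)
    qed
  qed
  also have "\<dots> = F a b" using assms by simp
  finally show ?thesis .
qed

lemma purity_expand:
  fixes \<psi> :: qstate
  assumes S: "S \<subseteq> {1..n}" and \<alpha>: "\<alpha> \<subseteq> S"
  shows "(\<Sum>z\<in>Pow ({1..n}-S). \<Sum>z'\<in>Pow ({1..n}-S). \<Sum>x\<in>Pow S. \<Sum>y\<in>Pow S. \<Sum>x'\<in>Pow S. \<Sum>y'\<in>Pow S.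
     (of_bool (\<forall>i\<in>\<alpha>. (i\<in>x \<longleftrightarrow> i\<in>y') \<and> (i\<in>x' \<longleftrightarrow> i\<in>y)) * of_bool (\<forall>i\<in>S-\<alpha>. (i\<in>x \<longleftrightarrow> i\<in>y) \<and> (i\<in>x' \<longleftrightarrow> i\<in>y'))) *
     (\<psi> (x \<union> z) * cnj (\<psi> (y \<union> z)) * \<psi> (x' \<union> z') * cnj (\<psi> (y' \<union> z'))))
   = (\<Sum>u\<in>Pow \<alpha>. \<Sum>v\<in>Pow \<alpha>. reduced_state n \<psi> \<alpha> u v * reduced_state n \<psi> \<alpha> v u)"
proof -
  define R where "R = {1..n} - S"
  have fS: "finite S" using S finite_subset by blast
  have f\<alpha>: "finite \<alpha>" using \<alpha> fS finite_subset by blast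
  have fR: "finite R" unfolding R_def by simp
  have fSa: "finite (S - \<alpha>)" using fS by simp
  define y0 where "y0 x x' = (x' \<inter> \<alpha>) \<union> (x - \<alpha>)" for x x' :: "nat set"
  define y1 where "y1 x x' = (x \<inter> \<alpha>) \<union> (x' - \<alpha>)" for x x' :: "nat set"
  define \<Psi> where "\<Psi> x y x' y' z z' = \<psi> (x \<union> z) * cnj (\<psi> (y \<union> z)) * \<psi> (x' \<union> z') * cnj (\<psi> (y' \<union> z'))" for x y x' y' z z'
  have cond: "(of_bool (\<forall>i\<in>\<alpha>. (i\<in>x \<longleftrightarrow> i\<in>y') \<and> (i\<in>x' \<longleftrightarrow> i\<in>y)) * of_bool (\<forall>i\<in>S-\<alpha>. (i\<in>x \<longleftrightarrow> i\<in>y) \<and> (i\<in>x' \<longleftrightarrow> i\<in>y')) :: complex)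
     = (if y = y0 x x' \<and> y' = y1 x x' then 1 else 0)"
    if "x \<in> Pow S" "y \<in> Pow S" "x' \<in> Pow S" "y' \<in> Pow S" for x y x' y'
  proof -
    have "((\<forall>i\<in>\<alpha>. (i\<in>x \<longleftrightarrow> i\<in>y') \<and> (i\<in>x' \<longleftrightarrow> i\<in>y)) \<and> (\<forall>i\<in>S-\<alpha>. (i\<in>x \<longleftrightarrow> i\<in>y) \<and> (i\<in>x' \<longleftrightarrow> i\<in>y')))
       = (y = y0 x x' \<and> y' = y1 x x')"
      using that \<alpha> unfolding y0_def y1_def by (auto simp: set_eq_iff)
    thus ?thesis by (subst of_bool_conj[symmetric], simp only: of_bool_def)
  qed
  have step1: "(\<Sum>y\<in>Pow S. \<Sum>y'\<in>Pow S.
     (of_bool (\<forall>i\<in>\<alpha>. (i\<in>x \<longleftrightarrow> i\<in>y') \<and> (i\<in>x' \<longleftrightarrow> i\<in>y)) * of_bool (\<forall>i\<in>S-\<alpha>. (i\<in>x \<longleftrightarrow> i\<in>y) \<and> (i\<in>x' \<longleftrightarrow> i\<in>y'))) *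
     (\<psi> (x \<union> z) * cnj (\<psi> (y \<union> z)) * \<psi> (x' \<union> z') * cnj (\<psi> (y' \<union> z'))))
     = \<Psi> x (y0 x x') x' (y1 x x') z z'" if "x \<in> Pow S" "x' \<in> Pow S" for x x' z z'
  proof -
    have "y0 x x' \<in> Pow S" "y1 x x' \<in> Pow S" using that \<alpha> unfolding y0_def y1_def by auto
    have "(\<Sum>y\<in>Pow S. \<Sum>y'\<in>Pow S.
     (of_bool (\<forall>i\<in>\<alpha>. (i\<in>x \<longleftrightarrow> i\<in>y') \<and> (i\<in>x' \<longleftrightarrow> i\<in>y)) * of_bool (\<forall>i\<in>S-\<alpha>. (i\<in>x \<longleftrightarrow> i\<in>y) \<and> (i\<in>x' \<longleftrightarrow> i\<in>y'))) *
     (\<psi> (x \<union> z) * cnj (\<psi> (y \<union> z)) * \<psi> (x' \<union> z') * cnj (\<psi> (y' \<union> z'))))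
      = (\<Sum>y\<in>Pow S. \<Sum>y'\<in>Pow S. (if y = y0 x x' \<and> y' = y1 x x' then 1 else 0) * \<Psi> x y x' y' z z')"
      unfolding \<Psi>_def by (intro sum.cong refl) (simp only: cond that)
    also have "\<dots> = \<Psi> x (y0 x x') x' (y1 x x') z z'"
      by (rule delta2) (use fS \<open>y0 x x' \<in> Pow S\<close> \<open>y1 x x' \<in> Pow S\<close> in auto)
    finally show ?thesis .
  qed
  have SU: "S = \<alpha> \<union> (S - \<alpha>)" using \<alpha> by auto
  have splitS: "(\<Sum>x\<in>Pow S. f x) = (\<Sum>u\<in>Pow \<alpha>. \<Sum>t\<in>Pow (S-\<alpha>). f (u \<union> t))" for f :: "nat set \<Rightarrow> complex"
    by (subst SU, rule sum_Pow_Un) (use f\<alpha> fSa in auto)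
  have LHS: "(\<Sum>z\<in>Pow R. \<Sum>z'\<in>Pow R. \<Sum>x\<in>Pow S. \<Sum>y\<in>Pow S. \<Sum>x'\<in>Pow S. \<Sum>y'\<in>Pow S.
     (of_bool (\<forall>i\<in>\<alpha>. (i\<in>x \<longleftrightarrow> i\<in>y') \<and> (i\<in>x' \<longleftrightarrow> i\<in>y)) * of_bool (\<forall>i\<in>S-\<alpha>. (i\<in>x \<longleftrightarrow> i\<in>y) \<and> (i\<in>x' \<longleftrightarrow> i\<in>y'))) *
     (\<psi> (x \<union> z) * cnj (\<psi> (y \<union> z)) * \<psi> (x' \<union> z') * cnj (\<psi> (y' \<union> z'))))
    = (\<Sum>z\<in>Pow R. \<Sum>z'\<in>Pow R. \<Sum>x\<in>Pow S. \<Sum>x'\<in>Pow S. \<Psi> x (y0 x x') x' (y1 x x') z z')"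
  proof (rule sum.cong[OF refl], rule sum.cong[OF refl], rule sum.cong[OF refl])
    fix z z' x assume x: "x \<in> Pow S"
    show "(\<Sum>y\<in>Pow S. \<Sum>x'\<in>Pow S. \<Sum>y'\<in>Pow S.
     (of_bool (\<forall>i\<in>\<alpha>. (i\<in>x \<longleftrightarrow> i\<in>y') \<and> (i\<in>x' \<longleftrightarrow> i\<in>y)) * of_bool (\<forall>i\<in>S-\<alpha>. (i\<in>x \<longleftrightarrow> i\<in>y) \<and> (i\<in>x' \<longleftrightarrow> i\<in>y'))) *
     (\<psi> (x \<union> z) * cnj (\<psi> (y \<union> z)) * \<psi> (x' \<union> z') * cnj (\<psi> (y' \<union> z'))))
      = (\<Sum>x'\<in>Pow S. \<Psi> x (y0 x x') x' (y1 x x') z z')"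
      by (subst sum.swap) (intro sum.cong refl step1 x)
  qed
  also have "\<dots> = (\<Sum>z\<in>Pow R. \<Sum>z'\<in>Pow R. \<Sum>u\<in>Pow \<alpha>. \<Sum>t\<in>Pow (S-\<alpha>). \<Sum>v\<in>Pow \<alpha>. \<Sum>t'\<in>Pow (S-\<alpha>).
        \<psi> (u \<union> (t \<union> z)) * cnj (\<psi> (v \<union> (t \<union> z))) * (\<psi> (v \<union> (t' \<union> z')) * cnj (\<psi> (u \<union> (t' \<union> z')))))"
  proof (rule sum.cong[OF refl], rule sum.cong[OF refl])
    fix z z' 
    show "(\<Sum>x\<in>Pow S. \<Sum>x'\<in>Pow S. \<Psi> x (y0 x x') x' (y1 x x') z z') = (\<Sum>u\<in>Pow \<alpha>. \<Sum>t\<in>Pow (S-\<alpha>). \<Sum>v\<in>Pow \<alpha>. \<Sum>t'\<in>Pow (S-\<alpha>).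
        \<psi> (u \<union> (t \<union> z)) * cnj (\<psi> (v \<union> (t \<union> z))) * (\<psi> (v \<union> (t' \<union> z')) * cnj (\<psi> (u \<union> (t' \<union> z')))))"
      unfolding splitS
    proof (rule sum.cong[OF refl], rule sum.cong[OF refl], rule sum.cong[OF refl], rule sum.cong[OF refl])
      fix u t v t' assume "u \<in> Pow \<alpha>" "t \<in> Pow (S-\<alpha>)" "v \<in> Pow \<alpha>" "t' \<in> Pow (S-\<alpha>)"
      hence "y0 (u \<union> t) (v \<union> t') = v \<union> t" "y1 (u \<union> t) (v \<union> t') = u \<union> t'"
        unfolding y0_def y1_def by blast+
      thus "\<Psi> (u \<union> t) (y0 (u \<union> t) (v \<union> t')) (v \<union> t') (y1 (u \<union> t) (v \<union> t')) z z' =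
        \<psi> (u \<union> (t \<union> z)) * cnj (\<psi> (v \<union> (t \<union> z))) * (\<psi> (v \<union> (t' \<union> z')) * cnj (\<psi> (u \<union> (t' \<union> z'))))"
        unfolding \<Psi>_def by (simp add: Un_assoc mult.assoc)
    qed
  qed
  also have "\<dots> = (\<Sum>u\<in>Pow \<alpha>. \<Sum>v\<in>Pow \<alpha>. \<Sum>t\<in>Pow (S-\<alpha>). \<Sum>t'\<in>Pow (S-\<alpha>). \<Sum>z\<in>Pow R. \<Sum>z'\<in>Pow R.
        \<psi> (u \<union> (t \<union> z)) * cnj (\<psi> (v \<union> (t \<union> z))) * (\<psi> (v \<union> (t' \<union> z')) * cnj (\<psi> (u \<union> (t' \<union> z')))))"
    by (rule perm6)
  also have "\<dots> = (\<Sum>u\<in>Pow \<alpha>. \<Sum>v\<in>Pow \<alpha>. reduced_state n \<psi> \<alpha> u v * reduced_state n \<psi> \<alpha> v u)"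
  proof (rule sum.cong[OF refl], rule sum.cong[OF refl])
    fix u v
    have UA: "{1..n} - \<alpha> = (S - \<alpha>) \<union> R" unfolding R_def using S \<alpha> by auto
    have rs: "reduced_state n \<psi> \<alpha> a b = (\<Sum>t\<in>Pow (S-\<alpha>). \<Sum>z\<in>Pow R. \<psi> (a \<union> (t \<union> z)) * cnj (\<psi> (b \<union> (t \<union> z))))" for a b
      unfolding reduced_state_def UA by (rule sum_Pow_Un) (use fSa fR in \<open>auto simp: R_def\<close>)
    show "(\<Sum>t\<in>Pow (S-\<alpha>). \<Sum>t'\<in>Pow (S-\<alpha>). \<Sum>z\<in>Pow R. \<Sum>z'\<in>Pow R.
        \<psi> (u \<union> (t \<union> z)) * cnj (\<psi> (v \<union> (t \<union> z))) * (\<psi> (v \<union> (t' \<union> z')) * cnj (\<psi> (u \<union> (t' \<union> z')))))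
      = reduced_state n \<psi> \<alpha> u v * reduced_state n \<psi> \<alpha> v u"
      unfolding rs by (simp only: sum_product)
  qed
  finally show ?thesis unfolding R_def .
qed

lemma in6: "(\<Sum>q\<in>Q. \<Sum>a\<in>A1. \<Sum>b\<in>A2. \<Sum>c\<in>A3. \<Sum>d\<in>A4. \<Sum>e\<in>A5. \<Sum>f\<in>A6. F q a b c d e f) =
  (\<Sum>a\<in>A1. \<Sum>b\<in>A2. \<Sum>c\<in>A3. \<Sum>d\<in>A4. \<Sum>e\<in>A5. \<Sum>f\<in>A6. \<Sum>q\<in>Q. F q a b c d e f)"
  by (simp only: sum.swap[where A=Q and B=A1] sum.swap[where A=Q and B=A2] sum.swap[where A=Q and B=A3]
     sum.swap[where A=Q and B=A4] sum.swap[where A=Q and B=A5] sum.swap[where A=Q and B=A6])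

lemma out6: "(\<Sum>a\<in>A1. \<Sum>b\<in>A2. \<Sum>c\<in>A3. \<Sum>d\<in>A4. \<Sum>e\<in>A5. \<Sum>f\<in>A6. \<Sum>q\<in>Q. F q a b c d e f) =
  (\<Sum>q\<in>Q. \<Sum>a\<in>A1. \<Sum>b\<in>A2. \<Sum>c\<in>A3. \<Sum>d\<in>A4. \<Sum>e\<in>A5. \<Sum>f\<in>A6. F q a b c d e f)"
  by (rule in6[symmetric])

lemma sum_sic_prob_sq:
  fixes \<psi> :: qstate
  assumes sic: "sic_povm \<phi>" and S: "S \<subseteq> {1..n}"
  shows "complex_of_real (\<Sum>q\<in>Pi\<^sub>E S (\<lambda>_. {1..4::nat}). (sic_prob n \<psi> \<phi> S q)^2)
     = (1/6^card S) * (\<Sum>\<alpha>\<in>Pow S. \<Sum>u\<in>Pow \<alpha>. \<Sum>v\<in>Pow \<alpha>. reduced_state n \<psi> \<alpha> u v * reduced_state n \<psi> \<alpha> v u)"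
proof -
  define R where "R = {1..n} - S"
  define D where "D = Pi\<^sub>E S (\<lambda>_. {1..4::nat})"
  define s where "s = card S"
  have fS: "finite S" using S finite_subset by blast
  define amp where "amp q z = (\<Sum>x\<in>Pow S. (\<Prod>i\<in>S. cnj (\<phi> (q i) (i \<in> x))) * \<psi> (x \<union> z))" for q :: "nat \<Rightarrow> nat" and z
  define G where "G q x y x' y' = (\<Prod>i\<in>S. cnj (\<phi> (q i) (i\<in>x)) * \<phi> (q i) (i\<in>y) * cnj (\<phi> (q i) (i\<in>x')) * \<phi> (q i) (i\<in>y'))" for q :: "nat \<Rightarrow> nat" and x y x' y'
  define \<Psi> where "\<Psi> x y x' y' z z' = \<psi> (x \<union> z) * cnj (\<psi> (y \<union> z)) * \<psi> (x' \<union> z') * cnj (\<psi> (y' \<union> z'))" for x y x' y' z z'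
  define C where "C \<alpha> x y x' y' = (of_bool (\<forall>i\<in>\<alpha>. (i\<in>x \<longleftrightarrow> i\<in>y') \<and> (i\<in>x' \<longleftrightarrow> i\<in>y)) * of_bool (\<forall>i\<in>S-\<alpha>. (i\<in>x \<longleftrightarrow> i\<in>y) \<and> (i\<in>x' \<longleftrightarrow> i\<in>y')) :: complex)" for \<alpha> x y x' y'
  have P1: "complex_of_real (sic_prob n \<psi> \<phi> S q) = (1/2^s) * (\<Sum>z\<in>Pow R. amp q z * cnj (amp q z))" for q
    unfolding sic_prob_def amp_def R_def s_def of_real_mult of_real_sum complex_norm_square by simp
  have P3: "(amp q z * cnj (amp q z)) * (amp q z' * cnj (amp q z')) =
     (\<Sum>x\<in>Pow S. \<Sum>y\<in>Pow S. \<Sum>x'\<in>Pow S. \<Sum>y'\<in>Pow S. G q x y x' y' * \<Psi> x y x' y' z z')" for q z z'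
  proof -
    have "(amp q z * cnj (amp q z)) * (amp q z' * cnj (amp q z')) =
      (\<Sum>x\<in>Pow S. \<Sum>x'\<in>Pow S. \<Sum>y\<in>Pow S. \<Sum>y'\<in>Pow S.
        ((\<Prod>i\<in>S. cnj (\<phi> (q i) (i \<in> x))) * \<psi> (x \<union> z) * ((\<Prod>i\<in>S. \<phi> (q i) (i \<in> y)) * cnj (\<psi> (y \<union> z)))) *
        ((\<Prod>i\<in>S. cnj (\<phi> (q i) (i \<in> x'))) * \<psi> (x' \<union> z') * ((\<Prod>i\<in>S. \<phi> (q i) (i \<in> y')) * cnj (\<psi> (y' \<union> z')))))"
      unfolding amp_def cnj_sum complex_cnj_mult cnj_prod complex_cnj_cnj by (simp only: sum_product)
    also have "\<dots> = (\<Sum>x\<in>Pow S. \<Sum>y\<in>Pow S. \<Sum>x'\<in>Pow S. \<Sum>y'\<in>Pow S.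
        ((\<Prod>i\<in>S. cnj (\<phi> (q i) (i \<in> x))) * \<psi> (x \<union> z) * ((\<Prod>i\<in>S. \<phi> (q i) (i \<in> y)) * cnj (\<psi> (y \<union> z)))) *
        ((\<Prod>i\<in>S. cnj (\<phi> (q i) (i \<in> x'))) * \<psi> (x' \<union> z') * ((\<Prod>i\<in>S. \<phi> (q i) (i \<in> y')) * cnj (\<psi> (y' \<union> z')))))"
      by (rule sum.cong[OF refl], rule sum.swap)
    also have "\<dots> = (\<Sum>x\<in>Pow S. \<Sum>y\<in>Pow S. \<Sum>x'\<in>Pow S. \<Sum>y'\<in>Pow S. G q x y x' y' * \<Psi> x y x' y' z z')"
      unfolding G_def \<Psi>_def by (simp only: prod.distrib mult_ac)
    finally show ?thesis .
  qed
  have "complex_of_real (\<Sum>q\<in>D. (sic_prob n \<psi> \<phi> S q)^2) = (\<Sum>q\<in>D. (complex_of_real (sic_prob n \<psi> \<phi> S q))^2)"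
    by simp
  also have "\<dots> = (\<Sum>q\<in>D. (1/4^s) * (\<Sum>z\<in>Pow R. \<Sum>z'\<in>Pow R. \<Sum>x\<in>Pow S. \<Sum>y\<in>Pow S. \<Sum>x'\<in>Pow S. \<Sum>y'\<in>Pow S. G q x y x' y' * \<Psi> x y x' y' z z'))"
  proof (rule sum.cong[OF refl])
    fix q
    show "(complex_of_real (sic_prob n \<psi> \<phi> S q))^2 = (1/4^s) * (\<Sum>z\<in>Pow R. \<Sum>z'\<in>Pow R. \<Sum>x\<in>Pow S. \<Sum>y\<in>Pow S. \<Sum>x'\<in>Pow S. \<Sum>y'\<in>Pow S. G q x y x' y' * \<Psi> x y x' y' z z')"
    proof -
      have c4: "(1/2^s) * (1/2^s) = (1/4^s :: complex)" by (simp add: power_mult_distrib[symmetric])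
      have "(complex_of_real (sic_prob n \<psi> \<phi> S q))^2 = ((1/2^s) * (1/2^s)) * ((\<Sum>z\<in>Pow R. amp q z * cnj (amp q z)) * (\<Sum>z'\<in>Pow R. amp q z' * cnj (amp q z')))"
        unfolding P1 power2_eq_square by (simp only: mult_ac)
      also have "\<dots> = (1/4^s) * (\<Sum>z\<in>Pow R. \<Sum>z'\<in>Pow R. (amp q z * cnj (amp q z)) * (amp q z' * cnj (amp q z')))"
        unfolding c4 sum_product ..
      finally show ?thesis unfolding P3 .
    qed
  qed
  also have "\<dots> = (1/4^s) * (\<Sum>z\<in>Pow R. \<Sum>z'\<in>Pow R. \<Sum>x\<in>Pow S. \<Sum>y\<in>Pow S. \<Sum>x'\<in>Pow S. \<Sum>y'\<in>Pow S. (\<Sum>q\<in>D. G q x y x' y') * \<Psi> x y x' y' z z')"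
    by (simp only: sum_distrib_left[symmetric] in6 sum_distrib_right[symmetric])
  also have "\<dots> = (1/4^s) * (\<Sum>z\<in>Pow R. \<Sum>z'\<in>Pow R. \<Sum>x\<in>Pow S. \<Sum>y\<in>Pow S. \<Sum>x'\<in>Pow S. \<Sum>y'\<in>Pow S. (2/3)^s * (\<Sum>\<alpha>\<in>Pow S. C \<alpha> x y x' y' * \<Psi> x y x' y' z z'))"
    unfolding D_def G_def sic_tensor[OF sic fS] C_def s_def by (simp only: sum_distrib_right mult.assoc)
  also have "\<dots> = (1/4^s) * (2/3)^s * (\<Sum>\<alpha>\<in>Pow S. \<Sum>z\<in>Pow R. \<Sum>z'\<in>Pow R. \<Sum>x\<in>Pow S. \<Sum>y\<in>Pow S. \<Sum>x'\<in>Pow S. \<Sum>y'\<in>Pow S. C \<alpha> x y x' y' * \<Psi> x y x' y' z z')"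
    by (simp only: sum_distrib_left[symmetric] out6 mult.assoc)
  also have "\<dots> = (1/6^s) * (\<Sum>\<alpha>\<in>Pow S. \<Sum>u\<in>Pow \<alpha>. \<Sum>v\<in>Pow \<alpha>. reduced_state n \<psi> \<alpha> u v * reduced_state n \<psi> \<alpha> v u)"
  proof -
    have "(1/4^s) * (2/3)^s = (1/6^s :: complex)"
    proof -
      have e: "(1/4) * (2/3) = (1/6::complex)" by simp
      have "(1/4^s) * (2/3)^s = ((1/4) * (2/3) :: complex)^s" by (simp only: power_mult_distrib power_one_over)
      also have "\<dots> = 1/6^s" unfolding e by (rule power_one_over)
      finally show ?thesis .
    qed
    moreover have "(\<Sum>z\<in>Pow R. \<Sum>z'\<in>Pow R. \<Sum>x\<in>Pow S. \<Sum>y\<in>Pow S. \<Sum>x'\<in>Pow S. \<Sum>y'\<in>Pow S. C \<alpha> x y x' y' * \<Psi> x y x' y' z z')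
        = (\<Sum>u\<in>Pow \<alpha>. \<Sum>v\<in>Pow \<alpha>. reduced_state n \<psi> \<alpha> u v * reduced_state n \<psi> \<alpha> v u)" if "\<alpha> \<in> Pow S" for \<alpha>
      unfolding C_def \<Psi>_def R_def by (rule purity_expand) (use S that in auto)
    ultimately show ?thesis by simp
  qed
  finally show ?thesis unfolding D_def s_def .
qed

lemma pure_norm:
  assumes "pure_state n \<psi>"
  shows "(\<Sum>T\<in>Pow {1..n}. \<psi> T * cnj (\<psi> T)) = 1"
proof -
  have "(\<Sum>T\<in>Pow {1..n}. (cmod (\<psi> T))^2) = 1" using assms unfolding pure_state_def by blast
  hence "complex_of_real (\<Sum>T\<in>Pow {1..n}. (cmod (\<psi> T))^2) = 1" by simp
  thus ?thesis unfolding of_real_sum complex_norm_square .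
qed

lemma X_empty:
  assumes "pure_state n \<psi>"
  shows "(\<Sum>u\<in>Pow {}. \<Sum>v\<in>Pow {}. reduced_state n \<psi> {} u v * reduced_state n \<psi> {} v u) = 1"
  using pure_norm[OF assms] by (simp add: reduced_state_def)

lemma rs_cnj: "reduced_state n \<psi> \<alpha> v u = cnj (reduced_state n \<psi> \<alpha> u v)"
  unfolding reduced_state_def cnj_sum by (simp add: mult.commute)

lemma purity_le1:
  assumes "pure_state n \<psi>" "\<alpha> \<subseteq> {1..n}"
  shows "Re (\<Sum>u\<in>Pow \<alpha>. \<Sum>v\<in>Pow \<alpha>. reduced_state n \<psi> \<alpha> u v * reduced_state n \<psi> \<alpha> v u) \<le> 1"
proof -
  define W where "W = Pow ({1..n} - \<alpha>)"
  define r where "r u = (\<Sum>w\<in>W. (cmod (\<psi> (u \<union> w)))^2)" for u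
  have fa: "finite \<alpha>" using assms(2) finite_subset by blast
  have fW: "finite W" unfolding W_def by simp
  have cs: "(cmod (reduced_state n \<psi> \<alpha> u v))^2 \<le> r u * r v" for u v
  proof -
    have "cmod (reduced_state n \<psi> \<alpha> u v) \<le> (\<Sum>w\<in>W. cmod (\<psi> (u \<union> w)) * cmod (\<psi> (v \<union> w)))"
      unfolding reduced_state_def W_def[symmetric]
      by (rule order_trans[OF norm_sum]) (simp add: norm_mult)
    hence "(cmod (reduced_state n \<psi> \<alpha> u v))^2 \<le> (\<Sum>w\<in>W. cmod (\<psi> (u \<union> w)) * cmod (\<psi> (v \<union> w)))^2"
      by (simp add: power_mono)
    also have "\<dots> \<le> r u * r v" unfolding r_def by (rule Cauchy_Schwarz_ineq_sum)
    finally show ?thesis .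
  qed
  have "Re (\<Sum>u\<in>Pow \<alpha>. \<Sum>v\<in>Pow \<alpha>. reduced_state n \<psi> \<alpha> u v * reduced_state n \<psi> \<alpha> v u)
      = (\<Sum>u\<in>Pow \<alpha>. \<Sum>v\<in>Pow \<alpha>. (cmod (reduced_state n \<psi> \<alpha> u v))^2)"
  proof -
    have "reduced_state n \<psi> \<alpha> u v * reduced_state n \<psi> \<alpha> v u = complex_of_real ((cmod (reduced_state n \<psi> \<alpha> u v))^2)" for u v
      unfolding rs_cnj[of n \<psi> \<alpha> v u] complex_norm_square ..
    thus ?thesis by (simp add: Re_sum)
  qed
  also have "\<dots> \<le> (\<Sum>u\<in>Pow \<alpha>. \<Sum>v\<in>Pow \<alpha>. r u * r v)"
    by (intro sum_mono cs)
  also have "\<dots> = (\<Sum>u\<in>Pow \<alpha>. r u)^2"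
    by (simp add: power2_eq_square sum_product)
  also have "(\<Sum>u\<in>Pow \<alpha>. r u) = 1"
  proof -
    have U: "{1..n} = \<alpha> \<union> ({1..n} - \<alpha>)" using assms(2) by auto
    have "(\<Sum>u\<in>Pow \<alpha>. r u) = (\<Sum>T\<in>Pow {1..n}. (cmod (\<psi> T))^2)"
      unfolding r_def W_def by (subst U, subst sum_Pow_Un) (use fa in auto)
    also have "\<dots> = 1" using assms(1) unfolding pure_state_def by blast
    finally show ?thesis .
  qed
  finally show ?thesis by simp
qed

lemma quantum_main:
  fixes \<psi> :: qstate
  assumes ps: "pure_state n \<psi>" and sic: "sic_povm \<phi>" and S: "S \<subseteq> {1..n}"
  defines "p \<equiv> (\<Sum>q\<in>Pi\<^sub>E S (\<lambda>_. {1..4::nat}). (sic_prob n \<psi> \<phi> S q)^2)"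
  shows "concentratable_entanglement n \<psi> S = 1 - 3^card S * p" and "3^card S * p \<le> 1"
proof -
  define X where "X \<alpha> = (\<Sum>u\<in>Pow \<alpha>. \<Sum>v\<in>Pow \<alpha>. reduced_state n \<psi> \<alpha> u v * reduced_state n \<psi> \<alpha> v u)" for \<alpha>
  have fS: "finite S" using S finite_subset by blast
  have X0: "X {} = 1" unfolding X_def by (rule X_empty[OF ps])
  have pur: "purity n \<psi> \<alpha> = Re (X \<alpha>)" for \<alpha>
  proof (cases "\<alpha> = {}")
    case True thus ?thesis using X0 by (simp add: purity_def)
  next
    case False thus ?thesis by (simp add: purity_def X_def)
  qed
  have pX: "p = (1/6^card S) * (\<Sum>\<alpha>\<in>Pow S. purity n \<psi> \<alpha>)"
  proof -
    have "complex_of_real p = (1/6^card S) * (\<Sum>\<alpha>\<in>Pow S. X \<alpha>)"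
      unfolding p_def X_def by (rule sum_sic_prob_sq[OF sic S])
    hence "p = Re ((1/6^card S) * (\<Sum>\<alpha>\<in>Pow S. X \<alpha>))" by (metis Re_complex_of_real)
    also have "\<dots> = (1/6^card S) * (\<Sum>\<alpha>\<in>Pow S. Re (X \<alpha>))"
      by (simp add: Re_sum)
    finally show ?thesis unfolding pur .
  qed
  have c36: "3^card S * (1/6^card S) = (1/2^card S :: real)"
  proof -
    have "(6::real)^card S = 3^card S * 2^card S" by (simp flip: power_mult_distrib)
    thus ?thesis by simp
  qed
  show "concentratable_entanglement n \<psi> S = 1 - 3^card S * p"
    unfolding concentratable_entanglement_def pX mult.assoc[symmetric] c36 ..
  have "(\<Sum>\<alpha>\<in>Pow S. purity n \<psi> \<alpha>) \<le> (\<Sum>\<alpha>\<in>Pow S. 1)"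
  proof (rule sum_mono)
    fix \<alpha> assume "\<alpha> \<in> Pow S"
    hence "\<alpha> \<subseteq> {1..n}" using S by auto
    thus "purity n \<psi> \<alpha> \<le> 1" unfolding pur X_def by (rule purity_le1[OF ps])
  qed
  also have "\<dots> = 2^card S" using fS by (simp add: card_Pow)
  finally have "(\<Sum>\<alpha>\<in>Pow S. purity n \<psi> \<alpha>) \<le> 2^card S" .
  thus "3^card S * p \<le> 1"
    unfolding pX mult.assoc[symmetric] c36 by (simp add: field_simps)
qed

lemma count_sorted:
  fixes ys :: "real list"
  assumes "\<And>k. k \<in> K \<Longrightarrow> k < length ys \<and> P (ys ! k)"
  shows "card K \<le> length (filter P ys)"
proof -
  have "K \<subseteq> {i. i < length ys \<and> P (ys!i)}" using assms by auto
  hence "card K \<le> card {i. i < length ys \<and> P (ys!i)}" by (intro card_mono) auto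
  thus ?thesis by (simp add: length_filter_conv_card)
qed

lemma median_lemma:
  fixes xs :: "real list"
  assumes ne: "xs \<noteq> []" and dev: "\<bar>median xs - c\<bar> \<ge> \<epsilon>"
  shows "real (length xs) \<le> 2 * real (length (filter (\<lambda>x. \<bar>x - c\<bar> \<ge> \<epsilon>) xs))"
proof -
  define ys where "ys = sort xs"
  define m where "m = length xs"
  define P where "P = (\<lambda>x::real. \<bar>x - c\<bar> \<ge> \<epsilon>)"
  have sy: "sorted ys" and ly: "length ys = m" unfolding ys_def m_def by auto
  have m0: "m > 0" using ne unfolding m_def by auto
  have fl: "length (filter P ys) = length (filter P xs)"
  proof -
    have "mset ys = mset xs" unfolding ys_def by simp
    hence "mset (filter P ys) = mset (filter P xs)" by simp
    thus ?thesis by (metis size_mset)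
  qed
  have med: "median xs = (if even m then (ys ! (m div 2 - 1) + ys ! (m div 2)) / 2 else ys ! (m div 2))"
    unfolding median_def ys_def m_def Let_def by simp
  have key: "real m \<le> 2 * real (length (filter P ys))"
  proof (cases "median xs \<ge> c + \<epsilon>")
    case True
    have ge: "ys ! (m div 2) \<ge> c + \<epsilon>"
    proof (cases "even m")
      case True
      hence "m div 2 \<ge> 1" using m0 by auto
      hence "ys ! (m div 2 - 1) \<le> ys ! (m div 2)" using sy ly m0 by (intro sorted_nth_mono) auto
      thus ?thesis using \<open>median xs \<ge> c + \<epsilon>\<close> med True by auto
    next
      case False thus ?thesis using \<open>median xs \<ge> c + \<epsilon>\<close> med by auto
    qed
    have "card {m div 2..<m} \<le> length (filter P ys)"
    proof (rule count_sorted)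
      fix k assume k: "k \<in> {m div 2..<m}"
      hence "ys ! (m div 2) \<le> ys ! k" using sy ly by (intro sorted_nth_mono) auto
      thus "k < length ys \<and> P (ys ! k)" using k ge ly unfolding P_def by auto
    qed
    thus ?thesis by simp
  next
    case False
    hence le: "median xs \<le> c - \<epsilon>" using dev by auto
    define k1 where "k1 = (if even m then m div 2 - 1 else m div 2)"
    have k1m: "k1 < m" unfolding k1_def using m0 by auto
    have le1: "ys ! k1 \<le> c - \<epsilon>"
    proof (cases "even m")
      case True
      hence "m div 2 \<ge> 1" using m0 by auto
      hence "ys ! (m div 2 - 1) \<le> ys ! (m div 2)" using sy ly m0 by (intro sorted_nth_mono) auto
      thus ?thesis using le med True unfolding k1_def by auto
    next
      case False thus ?thesis using le med unfolding k1_def by auto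
    qed
    have "card {0..k1} \<le> length (filter P ys)"
    proof (rule count_sorted)
      fix k assume k: "k \<in> {0..k1}"
      hence "ys ! k \<le> ys ! k1" using sy ly k1m by (intro sorted_nth_mono) auto
      thus "k < length ys \<and> P (ys ! k)" using k le1 ly k1m unfolding P_def by auto
    qed
    moreover have "real m \<le> 2 * real (card {0..k1})" unfolding k1_def using m0 by auto
    ultimately show ?thesis by linarith
  qed
  thus ?thesis using fl unfolding m_def P_def by simp
qed

lemma measurable_PiM_finite_all:
  assumes fK: "finite K" and fD: "finite D"
  shows "g \<in> measurable (PiM K (\<lambda>_. count_space D)) (borel :: real measure)"
proof (rule measurableI)
  have sp: "space (PiM K (\<lambda>_. count_space D)) = PiE K (\<lambda>_. D)" by (simp add: space_PiM)
  have all: "X \<in> sets (PiM K (\<lambda>_. count_space D))" if X: "X \<subseteq> PiE K (\<lambda>_. D)" for X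
  proof -
    have fX: "finite X" using X finite_PiE[OF fK, of "\<lambda>_. D"] fD finite_subset by blast
    have sing: "{r} \<in> sets (PiM K (\<lambda>_. count_space D))" if r: "r \<in> X" for r
    proof -
      have rr: "r \<in> PiE K (\<lambda>_. D)" using r X by auto
      have "{r} = PiE K (\<lambda>k. {r k})"
        using rr by (auto simp: PiE_iff extensional_def fun_eq_iff) (metis)
      also have "\<dots> \<in> sets (PiM K (\<lambda>_. count_space D))"
        by (rule sets_PiM_I_countable) (use fK rr in \<open>auto intro: countable_finite\<close>)
      finally show ?thesis .
    qed
    have "X = (\<Union>r\<in>X. {r})" by auto
    also have "\<dots> \<in> sets (PiM K (\<lambda>_. count_space D))"
      using fX sing by (intro sets.finite_UN) auto
    finally show ?thesis .
  qed
  fix A :: "real set"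
  show "g -` A \<inter> space (PiM K (\<lambda>_. count_space D)) \<in> sets (PiM K (\<lambda>_. count_space D))"
    by (rule all) (auto simp: sp)
qed simp

locale sic_exp = prob_space +
  fixes D :: "(nat \<Rightarrow> nat) set" and Q :: "nat \<Rightarrow> 'a \<Rightarrow> (nat \<Rightarrow> nat)" and Pq :: "(nat \<Rightarrow> nat) \<Rightarrow> real"
    and I :: "nat set"
  assumes fD: "finite D"
    and indep: "indep_vars (\<lambda>_. count_space D) Q I"
    and dist: "\<And>i q. i \<in> I \<Longrightarrow> q \<in> D \<Longrightarrow> prob {\<omega>\<in>space M. Q i \<omega> = q} = Pq q"
begin

lemma Q_meas: "i \<in> I \<Longrightarrow> Q i \<in> measurable M (count_space D)"
  using indep unfolding indep_vars_def by auto

lemma Q_in: "i \<in> I \<Longrightarrow> \<omega> \<in> space M \<Longrightarrow> Q i \<omega> \<in> D"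
  using measurable_space[OF Q_meas] by fastforce

lemma joint_event:
  assumes "J \<subseteq> I" "J \<noteq> {}" "finite J" "\<And>k. k \<in> J \<Longrightarrow> f k \<in> D"
  shows "{\<omega>\<in>space M. \<forall>k\<in>J. Q k \<omega> = f k} \<in> events"
proof -
  have "{\<omega>\<in>space M. \<forall>k\<in>J. Q k \<omega> = f k} = (\<Inter>k\<in>J. Q k -` {f k} \<inter> space M)"
    using assms(2) by auto
  also have "\<dots> \<in> events"
  proof (intro sets.finite_INT assms(3) assms(2))
    fix k assume "k \<in> J"
    hence "k \<in> I" using assms(1) by auto
    show "Q k -` {f k} \<inter> space M \<in> events"
      by (rule measurable_sets[OF Q_meas[OF \<open>k \<in> I\<close>]]) (use assms(4) \<open>k \<in> J\<close> in simp)
  qed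
  finally show ?thesis .
qed

lemma joint:
  assumes "J \<subseteq> I" "J \<noteq> {}" "finite J" "\<And>k. k \<in> J \<Longrightarrow> f k \<in> D"
  shows "prob {\<omega>\<in>space M. \<forall>k\<in>J. Q k \<omega> = f k} = (\<Prod>k\<in>J. Pq (f k))"
proof -
  have "{\<omega>\<in>space M. \<forall>k\<in>J. Q k \<omega> = f k} = (\<Inter>k\<in>J. Q k -` {f k} \<inter> space M)"
    using assms(2) by auto
  hence "prob {\<omega>\<in>space M. \<forall>k\<in>J. Q k \<omega> = f k} = (\<Prod>k\<in>J. prob (Q k -` {f k} \<inter> space M))"
    using indep_varsD[OF indep assms(2) assms(3) assms(1)] assms(4) by simp
  also have "\<dots> = (\<Prod>k\<in>J. Pq (f k))"
  proof (rule prod.cong[OF refl])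
    fix k assume k: "k \<in> J"
    have "Q k -` {f k} \<inter> space M = {\<omega>\<in>space M. Q k \<omega> = f k}" by auto
    thus "prob (Q k -` {f k} \<inter> space M) = Pq (f k)" using dist[of k "f k"] assms(1,4) k by auto
  qed
  finally show ?thesis .
qed

definition pp where "pp = (\<Sum>q\<in>D. (Pq q)^2)"

lemma pair_eq:
  assumes "a \<in> I" "b \<in> I" "a \<noteq> b"
  shows "prob {\<omega>\<in>space M. Q a \<omega> = Q b \<omega>} = pp"
proof -
  have "{\<omega>\<in>space M. Q a \<omega> = Q b \<omega>} = (\<Union>q\<in>D. {\<omega>\<in>space M. \<forall>k\<in>{a,b}. Q k \<omega> = q})"
    using Q_in assms by auto
  moreover have "prob (\<Union>q\<in>D. {\<omega>\<in>space M. \<forall>k\<in>{a,b}. Q k \<omega> = q}) = (\<Sum>q\<in>D. prob {\<omega>\<in>space M. \<forall>k\<in>{a,b}. Q k \<omega> = q})"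
  proof (rule finite_measure_finite_Union)
    show "finite D" by (rule fD)
    show "(\<lambda>q. {\<omega>\<in>space M. \<forall>k\<in>{a,b}. Q k \<omega> = q}) ` D \<subseteq> events"
    proof (rule image_subsetI)
      fix q assume "q \<in> D"
      show "{\<omega>\<in>space M. \<forall>k\<in>{a,b}. Q k \<omega> = q} \<in> events"
        by (rule joint_event[where f="\<lambda>_. q"]) (use assms \<open>q \<in> D\<close> in auto)
    qed
    show "disjoint_family_on (\<lambda>q. {\<omega>\<in>space M. \<forall>k\<in>{a,b}. Q k \<omega> = q}) D"
      unfolding disjoint_family_on_def by auto
  qed
  ultimately have "prob {\<omega>\<in>space M. Q a \<omega> = Q b \<omega>} = (\<Sum>q\<in>D. prob {\<omega>\<in>space M. \<forall>k\<in>{a,b}. Q k \<omega> = q})"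
    by simp
  also have "\<dots> = (\<Sum>q\<in>D. (Pq q)^2)"
    by (intro sum.cong refl, subst joint) (use assms in \<open>auto simp: power2_eq_square\<close>)
  finally show ?thesis unfolding pp_def .
qed

lemma quad_eq:
  assumes "a \<in> I" "b \<in> I" "c \<in> I" "d \<in> I" "distinct [a,b,c,d]"
  shows "prob ({\<omega>\<in>space M. Q a \<omega> = Q b \<omega>} \<inter> {\<omega>\<in>space M. Q c \<omega> = Q d \<omega>}) = pp^2"
proof -
  define F where "F qq = {\<omega>\<in>space M. \<forall>k\<in>{a,b,c,d}. Q k \<omega> = (if k \<in> {a,b} then fst qq else snd qq)}" for qq
  have "{\<omega>\<in>space M. Q a \<omega> = Q b \<omega>} \<inter> {\<omega>\<in>space M. Q c \<omega> = Q d \<omega>} = (\<Union>qq\<in>D \<times> D. F qq)"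
  proof
    show "{\<omega>\<in>space M. Q a \<omega> = Q b \<omega>} \<inter> {\<omega>\<in>space M. Q c \<omega> = Q d \<omega>} \<subseteq> (\<Union>qq\<in>D \<times> D. F qq)"
    proof
      fix \<omega> assume w: "\<omega> \<in> {\<omega>\<in>space M. Q a \<omega> = Q b \<omega>} \<inter> {\<omega>\<in>space M. Q c \<omega> = Q d \<omega>}"
      hence "(Q a \<omega>, Q c \<omega>) \<in> D \<times> D" using Q_in assms by auto
      moreover have "\<omega> \<in> F (Q a \<omega>, Q c \<omega>)" using w assms unfolding F_def by auto
      ultimately show "\<omega> \<in> (\<Union>qq\<in>D \<times> D. F qq)" by blast
    qed
    show "(\<Union>qq\<in>D \<times> D. F qq) \<subseteq> {\<omega>\<in>space M. Q a \<omega> = Q b \<omega>} \<inter> {\<omega>\<in>space M. Q c \<omega> = Q d \<omega>}"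
      using assms unfolding F_def by auto
  qed
  moreover have "prob (\<Union>qq\<in>D \<times> D. F qq) = (\<Sum>qq\<in>D \<times> D. prob (F qq))"
  proof (rule finite_measure_finite_Union)
    show "finite (D \<times> D)" using fD by simp
    show "F ` (D \<times> D) \<subseteq> events"
    proof (rule image_subsetI)
      fix qq assume "qq \<in> D \<times> D"
      thus "F qq \<in> events" unfolding F_def by (intro joint_event) (use assms in auto)
    qed
    show "disjoint_family_on F (D \<times> D)"
      unfolding disjoint_family_on_def F_def using assms by fastforce
  qed
  moreover have "prob (F qq) = (Pq (fst qq))^2 * (Pq (snd qq))^2" if "qq \<in> D \<times> D" for qq
    unfolding F_def using assms that by (subst joint) (auto simp: power2_eq_square)
  ultimately have "prob ({\<omega>\<in>space M. Q a \<omega> = Q b \<omega>} \<inter> {\<omega>\<in>space M. Q c \<omega> = Q d \<omega>})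
      = (\<Sum>qq\<in>D \<times> D. (Pq (fst qq))^2 * (Pq (snd qq))^2)" by simp
  also have "\<dots> = pp^2" unfolding pp_def power2_eq_square[of "sum _ _"] sum_product sum.cartesian_product
    by (simp add: case_prod_unfold)
  finally show ?thesis .
qed

end

context sic_exp
begin

lemma eq_event:
  assumes "a \<in> I" "b \<in> I"
  shows "{\<omega>\<in>space M. Q a \<omega> = Q b \<omega>} \<in> events"
proof -
  have "{\<omega>\<in>space M. Q a \<omega> = Q b \<omega>} = (\<Union>q\<in>D. {\<omega>\<in>space M. \<forall>k\<in>{a,b}. Q k \<omega> = q})"
    using Q_in assms by auto
  also have "\<dots> \<in> events"
  proof (intro sets.finite_UN fD)
    fix q assume "q \<in> D"
    show "{\<omega>\<in>space M. \<forall>k\<in>{a,b}. Q k \<omega> = q} \<in> events"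
      by (rule joint_event[where f="\<lambda>_. q"]) (use assms \<open>q \<in> D\<close> in auto)
  qed
  finally show ?thesis .
qed

lemma block_cheb:
  assumes fIb: "finite Ib" and Ib: "\<And>i. i \<in> Ib \<Longrightarrow> 2*i-1 \<in> I \<and> 2*i \<in> I \<and> i \<ge> 1" and a: "a > 0"
  shows "prob {\<omega>\<in>space M. \<bar>(\<Sum>i\<in>Ib. indicator {\<omega>\<in>space M. Q (2*i-1) \<omega> = Q (2*i) \<omega>} \<omega>) - real (card Ib) * pp\<bar> \<ge> a}
     \<le> real (card Ib) * pp / a^2"
proof -
  define A where "A i = {\<omega>\<in>space M. Q (2*i-1) \<omega> = Q (2*i) \<omega>}" for i
  define f where "f \<omega> = (\<Sum>i\<in>Ib. indicator (A i) \<omega> :: real)" for \<omega>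
  have Aev: "A i \<in> events" if "i \<in> Ib" for i unfolding A_def using Ib[OF that] by (intro eq_event) auto
  have Asp: "A i \<inter> space M = A i" for i unfolding A_def by auto
  have pA: "prob (A i) = pp" if "i \<in> Ib" for i unfolding A_def using Ib[OF that] by (intro pair_eq) auto
  have pAA: "prob (A i \<inter> A j) = pp^2" if "i \<in> Ib" "j \<in> Ib" "i \<noteq> j" for i j
    unfolding A_def using Ib[OF that(1)] Ib[OF that(2)] that(3) by (intro quad_eq) auto
  have int1: "integrable M (indicator (A i) :: 'a \<Rightarrow> real)" if "i \<in> Ib" for i
    using Aev[OF that] by (intro integrable_real_indicator) (auto simp: less_top[symmetric])
  have int2: "integrable M (\<lambda>\<omega>. indicator (A i) \<omega> * indicator (A j) \<omega> :: real)" if "i \<in> Ib" "j \<in> Ib" for i j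
    unfolding indicator_inter_arith[symmetric] using Aev[OF that(1)] Aev[OF that(2)]
    by (intro integrable_real_indicator) (auto simp: less_top[symmetric])
  have intf: "integrable M f" unfolding f_def by (intro Bochner_Integration.integrable_sum int1)
  have f2: "(f \<omega>)^2 = (\<Sum>i\<in>Ib. \<Sum>j\<in>Ib. indicator (A i) \<omega> * indicator (A j) \<omega>)" for \<omega>
    unfolding f_def power2_eq_square sum_product ..
  have intf2: "integrable M (\<lambda>\<omega>. (f \<omega>)^2)" unfolding f2
    by (intro Bochner_Integration.integrable_sum int2)
  have Ef: "expectation f = real (card Ib) * pp"
  proof -
    have "expectation f = (\<Sum>i\<in>Ib. expectation (indicator (A i)))"
      unfolding f_def by (rule Bochner_Integration.integral_sum) (rule int1)
    also have "\<dots> = (\<Sum>i\<in>Ib. pp)" by (intro sum.cong refl) (simp add: Asp pA)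
    finally show ?thesis by simp
  qed
  have Ef2: "expectation (\<lambda>\<omega>. (f \<omega>)^2) = real (card Ib) * pp + real (card Ib) * (real (card Ib) - 1) * pp^2"
  proof -
    have "expectation (\<lambda>\<omega>. (f \<omega>)^2) = (\<Sum>i\<in>Ib. \<Sum>j\<in>Ib. expectation (\<lambda>\<omega>. indicator (A i) \<omega> * indicator (A j) \<omega>))"
      unfolding f2 by (subst Bochner_Integration.integral_sum, use int2 in \<open>auto intro: Bochner_Integration.integrable_sum\<close>)
    also have "\<dots> = (\<Sum>i\<in>Ib. \<Sum>j\<in>Ib. prob (A i \<inter> A j))"
      unfolding indicator_inter_arith[symmetric] by (simp add: Int_absorb2 Asp Int_assoc)
    also have "\<dots> = (\<Sum>i\<in>Ib. pp + (real (card Ib) - 1) * pp^2)"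
    proof (rule sum.cong[OF refl])
      fix i assume i: "i \<in> Ib"
      have "(\<Sum>j\<in>Ib. prob (A i \<inter> A j)) = prob (A i \<inter> A i) + (\<Sum>j\<in>Ib - {i}. prob (A i \<inter> A j))"
        using i fIb by (simp add: sum.remove)
      also have "\<dots> = pp + (\<Sum>j\<in>Ib - {i}. pp^2)"
        using i by (simp add: pA pAA)
      also have "\<dots> = pp + (real (card Ib) - 1) * pp^2"
      proof -
        have "card Ib \<ge> 1" using i fIb by (metis One_nat_def Suc_leI card_gt_0_iff empty_iff)
        thus ?thesis using i fIb by (simp add: card_Diff_singleton of_nat_diff)
      qed
      finally show "(\<Sum>j\<in>Ib. prob (A i \<inter> A j)) = pp + (real (card Ib) - 1) * pp^2" .
    qed
    also have "\<dots> = real (card Ib) * pp + real (card Ib) * (real (card Ib) - 1) * pp^2"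
      by (simp add: algebra_simps)
    finally show ?thesis .
  qed
  have var: "variance f \<le> real (card Ib) * pp"
  proof -
    have "variance f = real (card Ib) * pp - real (card Ib) * pp^2"
      by (subst variance_eq[OF intf intf2], simp only: Ef Ef2) (simp add: algebra_simps power2_eq_square)
    also have "\<dots> \<le> real (card Ib) * pp" by simp
    finally show ?thesis .
  qed
  have rv: "random_variable borel f" using intf by auto
  have "prob {\<omega>\<in>space M. \<bar>f \<omega> - expectation f\<bar> \<ge> a} \<le> variance f / a^2"
    by (rule Chebyshev_inequality[OF rv intf2 a])
  also have "\<dots> \<le> real (card Ib) * pp / a^2"
    using var a by (simp add: divide_right_mono)
  finally show ?thesis unfolding Ef f_def A_def .
qed

end

theorem theorem4:
  fixes n :: nat and \<psi> :: qstate and S :: "nat set"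
    and \<phi> :: "nat \<Rightarrow> bool \<Rightarrow> complex"
    and \<epsilon> \<delta> :: real
    and \<Omega> :: "'a measure" and Q :: "nat \<Rightarrow> 'a \<Rightarrow> (nat \<Rightarrow> nat)"
  assumes "pure_state n \<psi>"
    and "S \<subseteq> {1..n}" and "S \<noteq> {}"
    and "\<epsilon> > 0" and "0 < \<delta>" and "\<delta> < 1"
    and "sic_povm \<phi>"
    and "prob_space \<Omega>"
    and "prob_space.indep_vars \<Omega> (\<lambda>_. count_space (Pi\<^sub>E S (\<lambda>_. {1..4::nat}))) Q
           {1..2 * num_blocks \<delta> * block_size (card S) \<epsilon>}"
    and "\<forall>i\<in>{1..2 * num_blocks \<delta> * block_size (card S) \<epsilon>}. \<forall>q\<in>Pi\<^sub>E S (\<lambda>_. {1..4::nat}).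
           measure \<Omega> {\<omega>\<in>space \<Omega>. Q i \<omega> = q} = sic_prob n \<psi> \<phi> S q"
  shows "measure \<Omega> {\<omega>\<in>space \<Omega>.
           \<bar>median (map (\<lambda>b. block_estimate (card S) (block_size (card S) \<epsilon>) (\<lambda>i. Q i \<omega>) b)
                        [1..<num_blocks \<delta> + 1])
            - concentratable_entanglement n \<psi> S\<bar> \<ge> \<epsilon>} \<le> \<delta>"
proof -
  note ps = assms(1) and Sn = assms(2) and eps = assms(4) and d0 = assms(5) and d1 = assms(6)
    and sic = assms(7)
  define s where "s = card S"
  define N where "N = num_blocks \<delta>"
  define B where "B = block_size s \<epsilon>"
  define I where "I = {1..2 * N * B}"
  define D where "D = Pi\<^sub>E S (\<lambda>_. {1..4::nat})"
  define Pq where "Pq = sic_prob n \<psi> \<phi> S"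
  define CE where "CE = concentratable_entanglement n \<psi> S"
  interpret prob_space \<Omega> by (rule assms(8))
  have fS: "finite S" using Sn finite_subset by blast
  interpret E: sic_exp \<Omega> D Q Pq I
  proof unfold_locales
    show "finite D" unfolding D_def using fS by (simp add: finite_PiE)
    show "indep_vars (\<lambda>_. count_space D) Q I" using assms(9) unfolding D_def I_def N_def B_def s_def .
    show "prob {\<omega>\<in>space \<Omega>. Q i \<omega> = q} = Pq q" if "i \<in> I" "q \<in> D" for i q
      using assms(10) that unfolding D_def I_def N_def B_def s_def Pq_def by blast
  qed
  have CEp: "CE = 1 - 3^s * E.pp" and pp1: "3^s * E.pp \<le> 1"
    using quantum_main[OF ps sic Sn] unfolding CE_def s_def E.pp_def unfolding D_def Pq_def by auto
  have pp0: "E.pp \<ge> 0" unfolding E.pp_def by (intro sum_nonneg) auto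
  have ln0: "ln (1/\<delta>) > 0" using d0 d1 by simp
  have N1: "N \<ge> 1" unfolding N_def num_blocks_def using ln0 by linarith
  have Nln: "real N \<ge> 8 * ln (1/\<delta>)" unfolding N_def num_blocks_def by (rule real_nat_ceiling_ge)
  have Bge: "real B \<ge> 4 * 3^s / \<epsilon>^2" unfolding B_def block_size_def by (rule real_nat_ceiling_ge)
  have B0: "real B > 0" using Bge eps by (smt (verit) divide_pos_pos zero_less_power)
  define Ib where "Ib b = {(b-1)*B+1..b*B}" for b
  define K where "K b = {2*(b-1)*B+1..2*b*B}" for b
  define A where "A i = {\<omega>\<in>space \<Omega>. Q (2*i-1) \<omega> = Q (2*i) \<omega>}" for i
  define est where "est \<omega> b = block_estimate s B (\<lambda>i. Q i \<omega>) b" for \<omega> b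
  define F where "F b = {\<omega>\<in>space \<Omega>. \<bar>est \<omega> b - CE\<bar> \<ge> \<epsilon>}" for b
  have cardIb: "card (Ib b) = B" if "b \<ge> 1" for b unfolding Ib_def using that
    by (simp add: algebra_simps)
  have IbI: "2*i-1 \<in> I \<and> 2*i \<in> I \<and> i \<ge> 1" if "b \<in> {1..N}" "i \<in> Ib b" for b i
  proof -
    have "i \<le> b * B" "i \<ge> 1" using that unfolding Ib_def by auto
    moreover have "b * B \<le> N * B" using that by auto
    ultimately have "i \<le> N * B" "i \<ge> 1" by linarith+
    thus ?thesis unfolding I_def by auto
  qed
  have est_eq: "est \<omega> b = 1 - 3^s * (1 / real B) * (\<Sum>i\<in>Ib b. indicator (A i) \<omega>)" if "\<omega> \<in> space \<Omega>" for \<omega> b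
  proof -
    have "(\<Sum>i\<in>Ib b. indicator (A i) \<omega> :: real) = real (card (Ib b \<inter> {i. \<omega> \<in> A i}))"
      unfolding indicator_def by (simp add: Ib_def)
    also have "Ib b \<inter> {i. \<omega> \<in> A i} = {i\<in>{(b-1)*B+1..b*B}. Q (2*i-1) \<omega> = Q (2*i) \<omega>}"
      unfolding Ib_def A_def using that by auto
    finally show ?thesis unfolding est_def block_estimate_def by simp
  qed
  have pF: "prob (F b) \<le> 1/4" if b: "b \<in> {1..N}" for b
  proof -
    define a where "a = \<epsilon> * real B / 3^s"
    have cb: "card (Ib b) = B" using cardIb b by auto
    have a0: "a > 0" unfolding a_def using eps B0 by simp
    have "F b = {\<omega>\<in>space \<Omega>. \<bar>(\<Sum>i\<in>Ib b. indicator {\<omega>\<in>space \<Omega>. Q (2*i-1) \<omega> = Q (2*i) \<omega>} \<omega>) - real (card (Ib b)) * E.pp\<bar> \<ge> a}"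
    proof -
      have "\<bar>est \<omega> b - CE\<bar> \<ge> \<epsilon> \<longleftrightarrow> \<bar>(\<Sum>i\<in>Ib b. indicator (A i) \<omega>) - real B * E.pp\<bar> \<ge> a" if "\<omega> \<in> space \<Omega>" for \<omega>
      proof -
        define x where "x = (\<Sum>i\<in>Ib b. indicator (A i) \<omega> :: real)"
        have "est \<omega> b - CE = - (3^s / real B) * (x - real B * E.pp)"
          unfolding est_eq[OF that] CEp x_def using B0 by (simp add: field_simps)
        hence "\<bar>est \<omega> b - CE\<bar> = (3^s / real B) * \<bar>x - real B * E.pp\<bar>"
          using B0 by (simp add: abs_mult)
        moreover have "(3^s / real B) * \<bar>x - real B * E.pp\<bar> \<ge> \<epsilon> \<longleftrightarrow> \<bar>x - real B * E.pp\<bar> \<ge> a"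
          unfolding a_def using B0 by (simp add: field_simps)
        ultimately show ?thesis unfolding x_def by simp
      qed
      thus ?thesis unfolding F_def A_def[symmetric] cb by auto
    qed
    also have "prob \<dots> \<le> real (card (Ib b)) * E.pp / a^2"
      by (rule E.block_cheb[OF _ _ a0]) (use IbI b in \<open>auto simp: Ib_def\<close>)
    also have "\<dots> = 3^s * (3^s * E.pp) / (\<epsilon>^2 * real B)"
      unfolding a_def cb using b B0 eps by (simp add: field_simps power2_eq_square power_mult_distrib)
    also have "\<dots> \<le> 3^s * 1 / (\<epsilon>^2 * real B)"
      using pp1 B0 eps by (intro divide_right_mono mult_left_mono) auto
    also have "\<dots> \<le> 1/4"
    proof -
      have "4 * 3^s \<le> \<epsilon>^2 * real B" using Bge eps by (simp add: field_simps)
      thus ?thesis using eps B0 by (simp add: field_simps)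
    qed
    finally show ?thesis .
  qed
  define Y where "Y b r = (of_bool (\<bar>block_estimate s B r b - CE\<bar> \<ge> \<epsilon>) :: real)" for b and r :: "nat \<Rightarrow> nat \<Rightarrow> nat"
  define W where "W b \<omega> = Y b (restrict (\<lambda>i. Q i \<omega>) (K b))" for b \<omega>
  have W_eq: "W b \<omega> = of_bool (\<bar>est \<omega> b - CE\<bar> \<ge> \<epsilon>)" if "b \<in> {1..N}" for b \<omega>
  proof -
    have "block_estimate s B (restrict (\<lambda>i. Q i \<omega>) (K b)) b = est \<omega> b"
    proof -
      have "{i\<in>{(b-1)*B+1..b*B}. restrict (\<lambda>i. Q i \<omega>) (K b) (2*i-1) = restrict (\<lambda>i. Q i \<omega>) (K b) (2*i)}
          = {i\<in>{(b-1)*B+1..b*B}. Q (2*i-1) \<omega> = Q (2*i) \<omega>}"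
      proof (rule Collect_cong)
        fix i
        show "(i \<in> {(b-1)*B+1..b*B} \<and> restrict (\<lambda>i. Q i \<omega>) (K b) (2*i-1) = restrict (\<lambda>i. Q i \<omega>) (K b) (2*i)) =
              (i \<in> {(b-1)*B+1..b*B} \<and> Q (2*i-1) \<omega> = Q (2*i) \<omega>)"
        proof (cases "i \<in> {(b-1)*B+1..b*B}")
          case True
          hence "2*i-1 \<in> K b" "2*i \<in> K b" using that unfolding K_def by (auto simp: algebra_simps)
          thus ?thesis using True by simp
        next
          case False thus ?thesis by blast
        qed
      qed
      thus ?thesis unfolding block_estimate_def est_def by simp
    qed
    thus ?thesis unfolding W_def Y_def by simp
  qed
  have W_F: "W b \<omega> = indicator (F b) \<omega>" if "b \<in> {1..N}" "\<omega> \<in> space \<Omega>" for b \<omega>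
    using W_eq[OF that(1)] that(2) unfolding F_def indicator_def by simp
  have indepW: "indep_vars (\<lambda>_. borel) W {1..N}"
  proof -
    have ind: "indep_vars (\<lambda>b. PiM (K b) (\<lambda>_. count_space D)) (\<lambda>b \<omega>. restrict (\<lambda>i. Q i \<omega>) (K b)) {1..N}"
    proof (rule indep_vars_restrict[OF E.indep])
      show "K b \<subseteq> I" if "b \<in> {1..N}" for b
      proof
        fix k assume "k \<in> K b"
        hence "k \<le> 2*b*B" "k \<ge> 1" unfolding K_def by auto
        moreover have "2 * b * B \<le> 2 * N * B" using that by auto
        ultimately have "k \<le> 2 * N * B" "k \<ge> 1" by linarith+
        thus "k \<in> I" unfolding I_def by auto
      qed
      show "disjoint_family_on K {1..N}"
      proof (unfold disjoint_family_on_def, intro ballI impI)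
        fix b c assume bc: "b \<in> {1..N}" "c \<in> {1..N}" "b \<noteq> c"
        show "K b \<inter> K c = {}"
        proof (rule ccontr)
          assume "K b \<inter> K c \<noteq> {}"
          then obtain k where k: "k \<in> K b" "k \<in> K c" by blast
          hence k4: "2*(b-1)*B < k" "k \<le> 2*b*B" "2*(c-1)*B < k" "k \<le> 2*c*B" unfolding K_def by auto
          have "2*(b-1)*B < 2*c*B" using k4(1) k4(4) by linarith
          hence "(b-1)*(2*B) < c*(2*B)" by (simp only: ac_simps)
          hence h1: "b - 1 < c" by (rule mult_right_less_imp_less) simp
          have "2*(c-1)*B < 2*b*B" using k4(2) k4(3) by linarith
          hence "(c-1)*(2*B) < b*(2*B)" by (simp only: ac_simps)
          hence h2: "c - 1 < b" by (rule mult_right_less_imp_less) simp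
          from h1 h2 have "b - 1 < c" "c - 1 < b" .
          thus False using bc by auto
        qed
      qed
    qed
    show ?thesis unfolding W_def
      by (rule indep_vars_compose2[OF ind]) (rule measurable_PiM_finite_all, simp add: K_def, rule E.fD)
  qed
  define \<mu> where "\<mu> = (\<Sum>b\<in>{1..N}. expectation (W b))"
  interpret H: Hoeffding_ineq \<Omega> "{1..N}" W "\<lambda>_. 0" "\<lambda>_. 1" \<mu>
  proof unfold_locales
    show "finite {1..N}" by simp
    show "indep_vars (\<lambda>_. borel) W {1..N}" by (rule indepW)
    show "AE x in \<Omega>. W i x \<in> {0..1}" if "i \<in> {1..N}" for i
      by (rule AE_I2) (simp add: W_def Y_def)
    show "\<mu> \<equiv> \<Sum>i\<in>{1..N}. expectation (W i)" unfolding \<mu>_def .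
  qed
  have mu: "\<mu> \<le> real N / 4"
  proof -
    have "expectation (W b) = prob (F b)" if "b \<in> {1..N}" for b
    proof -
      have "expectation (W b) = expectation (indicator (F b) :: 'a \<Rightarrow> real)"
        by (rule Bochner_Integration.integral_cong[OF refl]) (rule W_F[OF that])
      also have "\<dots> = prob (F b)" by (simp add: F_def Int_absorb2)
      finally show ?thesis .
    qed
    hence "\<mu> = (\<Sum>b\<in>{1..N}. prob (F b))" unfolding \<mu>_def by simp
    also have "\<dots> \<le> (\<Sum>b\<in>{1..N}. 1/4)" by (intro sum_mono pF)
    finally show ?thesis by simp
  qed
  have hoef: "prob {x\<in>space \<Omega>. (\<Sum>b\<in>{1..N}. W b x) \<ge> \<mu> + real N / 4} \<le> exp (- real N / 8)"
  proof -
    have "prob {x\<in>space \<Omega>. (\<Sum>b\<in>{1..N}. W b x) \<ge> \<mu> + real N / 4}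
        \<le> exp (-2 * (real N / 4)^2 / (\<Sum>i\<in>{1..N}. ((1::real) - 0)^2))"
      by (rule H.Hoeffding_ineq_ge) (use N1 in auto)
    also have "\<dots> = exp (- real N / 8)" using N1 by (simp add: power2_eq_square field_simps)
    finally show ?thesis .
  qed
  have evt: "{x\<in>space \<Omega>. (\<Sum>b\<in>{1..N}. W b x) \<ge> \<mu> + real N / 4} \<in> events"
  proof -
    have [measurable]: "W b \<in> borel_measurable \<Omega>" if "b \<in> {1..N}" for b
      using H.random_variable[OF that] .
    have "(\<lambda>x. \<Sum>b\<in>{1..N}. W b x) \<in> borel_measurable \<Omega>"
      by (intro borel_measurable_sum) (use H.random_variable in auto)
    thus ?thesis by measurable
  qed
  have incl: "{\<omega>\<in>space \<Omega>. \<bar>median (map (\<lambda>b. block_estimate (card S) (block_size (card S) \<epsilon>) (\<lambda>i. Q i \<omega>) b)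
                        [1..<num_blocks \<delta> + 1]) - concentratable_entanglement n \<psi> S\<bar> \<ge> \<epsilon>}
     \<subseteq> {x\<in>space \<Omega>. (\<Sum>b\<in>{1..N}. W b x) \<ge> \<mu> + real N / 4}"
  proof safe
    fix \<omega> assume w: "\<omega> \<in> space \<Omega>"
      and dev: "\<epsilon> \<le> \<bar>median (map (\<lambda>b. block_estimate (card S) (block_size (card S) \<epsilon>) (\<lambda>i. Q i \<omega>) b)
                        [1..<num_blocks \<delta> + 1]) - concentratable_entanglement n \<psi> S\<bar>"
    have dev': "\<epsilon> \<le> \<bar>median (map (est \<omega>) [1..<N + 1]) - CE\<bar>"
      using dev unfolding est_def s_def B_def N_def CE_def .
    have m1: "real (length (map (est \<omega>) [1..<N + 1])) \<le> 2 * real (length (filter (\<lambda>x. \<bar>x - CE\<bar> \<ge> \<epsilon>) (map (est \<omega>) [1..<N + 1])))"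
      by (rule median_lemma) (use N1 dev' in auto)
    have m2: "length (filter (\<lambda>x. \<bar>x - CE\<bar> \<ge> \<epsilon>) (map (est \<omega>) [1..<N + 1])) = card ({1..N} \<inter> {b. \<bar>est \<omega> b - CE\<bar> \<ge> \<epsilon>})"
    proof -
      have "length (filter (\<lambda>x. \<bar>x - CE\<bar> \<ge> \<epsilon>) (map (est \<omega>) [1..<N + 1])) = length (filter (\<lambda>b. \<bar>est \<omega> b - CE\<bar> \<ge> \<epsilon>) [1..<N + 1])"
        by (simp add: filter_map comp_def)
      also have "\<dots> = card ({b. \<bar>est \<omega> b - CE\<bar> \<ge> \<epsilon>} \<inter> set [1..<N + 1])"
        by (rule distinct_length_filter) simp
      also have "set [1..<N + 1] = {1..N}" by auto
      finally show ?thesis by (simp add: Int_commute)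
    qed
    have m3: "(\<Sum>b\<in>{1..N}. W b \<omega>) = real (card ({1..N} \<inter> {b. \<bar>est \<omega> b - CE\<bar> \<ge> \<epsilon>}))"
      by (simp add: W_eq)
    have lenN: "length (map (est \<omega>) [1..<N + 1]) = N" by simp
    have "real N \<le> 2 * (\<Sum>b\<in>{1..N}. W b \<omega>)" using m1 unfolding lenN m2 m3 .
    thus "\<mu> + real N / 4 \<le> (\<Sum>b\<in>{1..N}. W b \<omega>)" using mu by simp
  qed
  have "measure \<Omega> {\<omega>\<in>space \<Omega>. \<bar>median (map (\<lambda>b. block_estimate (card S) (block_size (card S) \<epsilon>) (\<lambda>i. Q i \<omega>) b)
                        [1..<num_blocks \<delta> + 1]) - concentratable_entanglement n \<psi> S\<bar> \<ge> \<epsilon>}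
     \<le> prob {x\<in>space \<Omega>. (\<Sum>b\<in>{1..N}. W b x) \<ge> \<mu> + real N / 4}"
    by (rule finite_measure_mono[OF incl evt])
  also have "\<dots> \<le> exp (- real N / 8)" by (rule hoef)
  also have "\<dots> \<le> \<delta>"
  proof -
    have "- real N / 8 \<le> ln \<delta>" using Nln d0 by (simp add: ln_div)
    hence "exp (- real N / 8) \<le> exp (ln \<delta>)" by simp
    thus ?thesis using d0 by simp
  qed
  finally show ?thesis .
qed

end
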